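(* Every planar $3$-tree has track number at most $4000$.
   Context: A planar $3$-tree is a triangulated plane graph $G$ with $n\ge 3$ vertices such that either $n=3$ and $G$ is a $3$-cycle, or $n>3$ and $G$ has a vertex whose deletion yields a planar $3$-tree with $n-1$ vertices. A $t$-track assignment of a graph $G=(V,E)$ is a partition of $V$ into $t$ sets $V_1,\dots,V_t$, each an independent set of $G$, together with a total order $<_i$ on each $V_i$ (each $(V_i,<_i)$ is called a track). An X-crossing consists of two edges $(u,v)$ and $(x,y)$ with $u,x\in V_i$, $v,y\in V_j$ for some $i\neq j$, $u<_i x$ and $y<_j v$. A track layout is a track assignment with no X-crossing, and the track number of $G$ is the minimum $t$ such that $G$ has a $t$-track layout. *)

theory Defs
  imports Main "HOL-Library.Multiset"
begin

text \<open>Planar 3-trees are described combinatorially together with their multiset of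
(triangular) faces: start from a 3-cycle (two faces, inner and outer, both
bounded by the triangle) and repeatedly insert a new vertex into a face,
joining it to the three vertices of that face (the face is replaced by the
three new triangular faces).  This is exactly the recursive definition by
deletion of a (necessarily degree-3) vertex of a triangulated plane graph.\<close>

inductive planar3tree_faces :: "'a set \<Rightarrow> 'a set set \<Rightarrow> 'a set multiset \<Rightarrow> bool" where
  base: "distinct [a, b, c] \<Longrightarrow>
     planar3tree_faces {a, b, c} {{a, b}, {b, c}, {a, c}} {#{a, b, c}, {a, b, c}#}"
| step: "planar3tree_faces V E F \<Longrightarrow> {x, y, z} \<in># F \<Longrightarrow> v \<notin> V \<Longrightarrow>
     planar3tree_faces (insert v V) (E \<union> {{v, x}, {v, y}, {v, z}})
       (add_mset {v, x, y} (add_mset {v, y, z} (add_mset {v, x, z} (F - {#{x, y, z}#}))))"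

definition planar_3_tree :: "'a set \<Rightarrow> 'a set set \<Rightarrow> bool" where
  "planar_3_tree V E \<longleftrightarrow> (\<exists>F. planar3tree_faces V E F)"

definition track_layout ::
  "'a set \<Rightarrow> 'a set set \<Rightarrow> nat \<Rightarrow> ('a \<Rightarrow> nat) \<Rightarrow> (nat \<Rightarrow> 'a rel) \<Rightarrow> bool" where
  "track_layout V E t col ord \<longleftrightarrow>
     (\<forall>v\<in>V. col v < t) \<and>
     (\<forall>u v. {u, v} \<in> E \<longrightarrow> col u \<noteq> col v) \<and>
     (\<forall>i<t. strict_linear_order_on {v\<in>V. col v = i} (ord i)) \<and>
     (\<forall>u v x y. {u, v} \<in> E \<and> {x, y} \<in> E \<and> u \<in> V \<and> v \<in> V \<and> x \<in> V \<and> y \<in> V \<and>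
        col u = col x \<and> col v = col y \<and> col u \<noteq> col v \<and>
        (u, x) \<in> ord (col u) \<and> (y, v) \<in> ord (col v) \<longrightarrow> False)"

definition has_track_layout :: "'a set \<Rightarrow> 'a set set \<Rightarrow> nat \<Rightarrow> bool" where
  "has_track_layout V E t \<longleftrightarrow> (\<exists>col ord. track_layout V E t col ord)"

end

theory Submission
  imports Defs
begin


definition adj :: "('a \<Rightarrow> 'a set) \<Rightarrow> 'a \<Rightarrow> 'a \<Rightarrow> bool" where
  "adj P u v \<longleftrightarrow> u \<in> P v \<or> v \<in> P u"

definition kstr :: "nat \<Rightarrow> 'a set \<Rightarrow> ('a \<Rightarrow> 'a set) \<Rightarrow> ('a \<Rightarrow> nat) \<Rightarrow> bool" where
  "kstr k V P rk \<longleftrightarrow> finite V \<and> inj_on rk V \<and>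
     (\<forall>v\<in>V. P v \<subseteq> V \<and> card (P v) \<le> k \<and> (\<forall>p\<in>P v. rk p < rk v) \<and>
        (\<forall>p\<in>P v. \<forall>q\<in>P v. rk p < rk q \<longrightarrow> p \<in> P q))"

definition good :: "'a set \<Rightarrow> ('a \<Rightarrow> 'a \<Rightarrow> bool) \<Rightarrow> nat \<Rightarrow> ('a \<Rightarrow> nat) \<Rightarrow> ('a \<Rightarrow> 'a \<Rightarrow> bool) \<Rightarrow> bool" where
  "good V ad t col lt \<longleftrightarrow> (\<forall>v\<in>V. col v < t) \<and> (\<forall>u\<in>V. \<forall>v\<in>V. ad u v \<longrightarrow> col u \<noteq> col v) \<and>
     (\<forall>x. \<not> lt x x) \<and> (\<forall>x y z. lt x y \<longrightarrow> lt y z \<longrightarrow> lt x z) \<and>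
     (\<forall>x\<in>V. \<forall>y\<in>V. x \<noteq> y \<longrightarrow> lt x y \<or> lt y x) \<and>
     (\<forall>u\<in>V. \<forall>v\<in>V. \<forall>x\<in>V. \<forall>y\<in>V. ad u v \<longrightarrow> ad x y \<longrightarrow> col u = col x \<longrightarrow> col v = col y \<longrightarrow>
         lt u x \<longrightarrow> lt y v \<longrightarrow> False)"

fun tt :: "nat \<Rightarrow> nat" where
  "tt 0 = 1" | "tt (Suc k) = 3 * tt k * tt k"

fun dd :: "('a \<Rightarrow> 'a set) \<Rightarrow> nat \<Rightarrow> 'a \<Rightarrow> nat" where
  "dd P 0 v = 0"
| "dd P (Suc n) v = (if P v = {} then 0 else Suc (Min (dd P n ` P v)))"

fun rt :: "('a \<Rightarrow> 'a set) \<Rightarrow> nat \<Rightarrow> 'a \<Rightarrow> 'a" where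
  "rt Q 0 v = v"
| "rt Q (Suc n) v = (if Q v = {} then v else rt Q n (SOME p. p \<in> Q v))"

locale S =
  fixes k :: nat and V :: "'a set" and P :: "'a \<Rightarrow> 'a set" and rk :: "'a \<Rightarrow> nat"
  assumes ks: "kstr (Suc k) V P rk"
begin

lemma finV: "finite V" using ks by (simp add: kstr_def)
lemma injrk: "inj_on rk V" using ks by (simp add: kstr_def)
lemma PV: "v \<in> V \<Longrightarrow> P v \<subseteq> V" using ks by (simp add: kstr_def)
lemma PV': "v \<in> V \<Longrightarrow> p \<in> P v \<Longrightarrow> p \<in> V" using PV by blast
lemma cardP: "v \<in> V \<Longrightarrow> card (P v) \<le> Suc k" using ks by (simp add: kstr_def)
lemma Prk: "v \<in> V \<Longrightarrow> p \<in> P v \<Longrightarrow> rk p < rk v" using ks by (simp add: kstr_def)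
lemma cliq: "v \<in> V \<Longrightarrow> p \<in> P v \<Longrightarrow> q \<in> P v \<Longrightarrow> rk p < rk q \<Longrightarrow> p \<in> P q"
  using ks by (simp add: kstr_def)
lemma finP: "v \<in> V \<Longrightarrow> finite (P v)" using PV finV finite_subset by blast
lemma rk_eq: "p \<in> V \<Longrightarrow> q \<in> V \<Longrightarrow> rk p = rk q \<Longrightarrow> p = q" using injrk inj_on_def by metis

lemma dd_stable: "v \<in> V \<Longrightarrow> rk v < n \<Longrightarrow> rk v < m \<Longrightarrow> dd P n v = dd P m v"
proof (induction "rk v" arbitrary: v n m rule: less_induct)
  case less
  obtain n' where n: "n = Suc n'" using less.prems by (cases n) auto
  obtain m' where m: "m = Suc m'" using less.prems by (cases m) auto
  have "dd P n' ` P v = dd P m' ` P v"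
  proof (rule image_cong[OF refl])
    fix p assume p: "p \<in> P v"
    have "rk p < rk v" using Prk less.prems p by auto
    then show "dd P n' p = dd P m' p"
      using less.hyps[of p n' m'] less.prems p PV' n m by auto
  qed
  then show ?case by (simp add: n m)
qed

definition d :: "'a \<Rightarrow> nat" where "d v = dd P (Suc (rk v)) v"

lemma d_eq: "v \<in> V \<Longrightarrow> d v = (if P v = {} then 0 else Suc (Min (d ` P v)))"
proof -
  assume v: "v \<in> V"
  have "dd P (rk v) ` P v = d ` P v"
  proof (rule image_cong[OF refl])
    fix p assume p: "p \<in> P v"
    show "dd P (rk v) p = d p" unfolding d_def
      using dd_stable[of p "rk v" "Suc (rk p)"] Prk[OF v p] PV'[OF v p] by auto
  qed
  then show ?thesis unfolding d_def by simp
qed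

lemma D0: "v \<in> V \<Longrightarrow> P v = {} \<Longrightarrow> d v = 0" using d_eq by simp
lemma D1: "v \<in> V \<Longrightarrow> p \<in> P v \<Longrightarrow> d v \<le> Suc (d p)"
  using d_eq[of v] finP[of v] by (auto intro: Min_le)
lemma D2: "v \<in> V \<Longrightarrow> P v \<noteq> {} \<Longrightarrow> \<exists>m\<in>P v. d v = Suc (d m)"
proof -
  assume v: "v \<in> V" and ne: "P v \<noteq> {}"
  have "Min (d ` P v) \<in> d ` P v" using finP[OF v] ne by (intro Min_in) auto
  then show ?thesis using d_eq[OF v] ne by auto
qed
lemma D3: "v \<in> V \<Longrightarrow> p \<in> P v \<Longrightarrow> d p \<le> d v"
proof (induction "rk v" arbitrary: v p rule: less_induct)
  case less
  then have ne: "P v \<noteq> {}" by auto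
  obtain m where m: "m \<in> P v" "d v = Suc (d m)" using D2[OF less.prems(1) ne] by blast
  show ?case
  proof (cases "p = m")
    case True then show ?thesis using m by simp
  next
    case False
    have pV: "p \<in> V" and mV: "m \<in> V" using PV' less.prems m by auto
    have "rk p \<noteq> rk m" using rk_eq pV mV False by auto
    then consider "rk p < rk m" | "rk m < rk p" by linarith
    then show ?thesis
    proof cases
      case 1
      then have "p \<in> P m" using cliq less.prems m by blast
      then have "d p \<le> d m" using less.hyps[of m p] Prk less.prems m mV by auto
      then show ?thesis using m by simp
    next
      case 2
      then have "m \<in> P p" using cliq less.prems m by blast
      then show ?thesis using D1[OF pV] m by auto
    qed
  qed
qed

end

context S begin

definition P' :: "'a \<Rightarrow> 'a set" where "P' v = {p \<in> P v. d p = d v}"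

lemma P'_sub: "P' v \<subseteq> P v" unfolding P'_def by auto

lemma d_le1: "v \<in> V \<Longrightarrow> p \<in> P v \<Longrightarrow> d p = d v \<or> Suc (d p) = d v"
  using D1[of v p] D3[of v p] by auto

lemma kstr_P': "kstr k V P' rk"
  unfolding kstr_def
proof (intro conjI ballI[of V])
  show "finite V" by (rule finV)
  show "inj_on rk V" by (rule injrk)
  fix v assume v: "v \<in> V"
  show "P' v \<subseteq> V" using PV[OF v] P'_sub by blast
  show "card (P' v) \<le> k"
  proof (cases "P v = {}")
    case True then show ?thesis unfolding P'_def by simp
  next
    case False
    obtain m where m: "m \<in> P v" "d v = Suc (d m)" using D2[OF v False] by blast
    have "m \<notin> P' v" using m unfolding P'_def by auto
    then have "P' v \<subset> P v" using m P'_sub by blast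
    then have "card (P' v) < card (P v)" using finP[OF v] psubset_card_mono by blast
    then show ?thesis using cardP[OF v] by simp
  qed
  show "\<forall>p\<in>P' v. rk p < rk v" using Prk[OF v] P'_sub by blast
  show "\<forall>p\<in>P' v. \<forall>q\<in>P' v. rk p < rk q \<longrightarrow> p \<in> P' q"
    using cliq[OF v] unfolding P'_def by auto
qed

lemma adj_d: "u \<in> V \<Longrightarrow> v \<in> V \<Longrightarrow> adj P u v \<Longrightarrow> d u = d v \<or> Suc (d u) = d v \<or> d u = Suc (d v)"
  using d_le1[of v u] d_le1[of u v] unfolding adj_def by auto

lemma adj_same: "u \<in> V \<Longrightarrow> v \<in> V \<Longrightarrow> adj P u v \<Longrightarrow> d u = d v \<Longrightarrow> adj P' u v"
  unfolding adj_def P'_def by auto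

lemma adj_up: "u \<in> V \<Longrightarrow> v \<in> V \<Longrightarrow> adj P u v \<Longrightarrow> Suc (d u) = d v \<Longrightarrow> u \<in> P v"
  using D3[of u v] unfolding adj_def by auto

lemma P'_adj: "v \<in> V \<Longrightarrow> p \<in> P v \<Longrightarrow> q \<in> P v \<Longrightarrow> p \<noteq> q \<Longrightarrow> d p = d q \<Longrightarrow> adj P' p q"
proof -
  assume a: "v \<in> V" "p \<in> P v" "q \<in> P v" "p \<noteq> q" "d p = d q"
  have "rk p \<noteq> rk q" using rk_eq PV' a by metis
  then have "p \<in> P q \<or> q \<in> P p" using cliq a by (meson linorder_neqE_nat)
  then show ?thesis using a unfolding adj_def P'_def by auto
qed

lemma rt_stable: "v \<in> V \<Longrightarrow> rk v < n \<Longrightarrow> rk v < m \<Longrightarrow> rt P' n v = rt P' m v"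
proof (induction "rk v" arbitrary: v n m rule: less_induct)
  case less
  obtain n' where n: "n = Suc n'" using less.prems by (cases n) auto
  obtain m' where m: "m = Suc m'" using less.prems by (cases m) auto
  show ?case
  proof (cases "P' v = {}")
    case True then show ?thesis by (simp add: n m)
  next
    case False
    define q where "q = (SOME p. p \<in> P' v)"
    have q: "q \<in> P' v" unfolding q_def using False some_in_eq by blast
    then have "q \<in> P v" using P'_sub by blast
    then have "q \<in> V" "rk q < rk v" using PV' Prk less.prems by auto
    then have "rt P' n' q = rt P' m' q" using less.hyps[of q n' m'] less.prems n m by auto
    then show ?thesis using False by (simp add: n m q_def)
  qed
qed

definition root :: "'a \<Rightarrow> 'a" where "root v = rt P' (Suc (rk v)) v"

lemma root_eq: "v \<in> V \<Longrightarrow> root v = (if P' v = {} then v else root (SOME p. p \<in> P' v))"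
proof -
  assume v: "v \<in> V"
  show ?thesis
  proof (cases "P' v = {}")
    case True then show ?thesis unfolding root_def by simp
  next
    case False
    define q where "q = (SOME p. p \<in> P' v)"
    have q: "q \<in> P' v" unfolding q_def using False some_in_eq by blast
    then have "q \<in> P v" using P'_sub by blast
    then have "q \<in> V" "rk q < rk v" using PV' Prk v by auto
    then have "rt P' (rk v) q = root q" unfolding root_def using rt_stable[of q "rk v" "Suc (rk q)"] by auto
    then show ?thesis using False unfolding root_def by (simp add: q_def)
  qed
qed

lemma root_props: "v \<in> V \<Longrightarrow> root v \<in> V \<and> P' (root v) = {} \<and> d (root v) = d v"
proof (induction "rk v" arbitrary: v rule: less_induct)
  case less
  show ?case
  proof (cases "P' v = {}")
    case True then show ?thesis using root_eq[OF less.prems(1)] less.prems by simp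
  next
    case False
    define q where "q = (SOME p. p \<in> P' v)"
    have q: "q \<in> P' v" unfolding q_def using False some_in_eq by blast
    then have "q \<in> V" "rk q < rk v" "d q = d v" using PV' Prk less.prems P'_sub unfolding P'_def by auto
    then show ?thesis using less.hyps[of q] root_eq[OF less.prems] False q_def by auto
  qed
qed

lemma root_P': "v \<in> V \<Longrightarrow> p \<in> P' v \<Longrightarrow> root p = root v"
proof (induction "rk v" arbitrary: v p rule: less_induct)
  case less
  then have ne: "P' v \<noteq> {}" by auto
  define q where "q = (SOME p. p \<in> P' v)"
  have q: "q \<in> P' v" unfolding q_def using ne some_in_eq by blast
  have rv: "root v = root q" using root_eq[OF less.prems(1)] ne q_def by simp
  have qV: "q \<in> V" and pV: "p \<in> V" using q less.prems PV' P'_sub by blast+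
  have rq: "rk q < rk v" "rk p < rk v" using q less.prems Prk P'_sub by blast+
  show ?case
  proof (cases "p = q")
    case True then show ?thesis using rv by simp
  next
    case False
    have "rk p \<noteq> rk q" using rk_eq pV qV False by metis
    then consider "rk p < rk q" | "rk q < rk p" by linarith
    then show ?thesis
    proof cases
      case 1
      then have "p \<in> P' q" using kstr_P' less.prems q unfolding kstr_def by blast
      then show ?thesis using less.hyps[OF rq(1) qV] rv by simp
    next
      case 2
      then have "q \<in> P' p" using kstr_P' less.prems q unfolding kstr_def by blast
      then show ?thesis using less.hyps[OF rq(2) pV] rv by simp
    qed
  qed
qed

lemma root_adj: "u \<in> V \<Longrightarrow> v \<in> V \<Longrightarrow> adj P' u v \<Longrightarrow> root u = root v"
  using root_P'[of v u] root_P'[of u v] unfolding adj_def by auto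

lemma shadow: "v \<in> V \<Longrightarrow> p \<in> P v \<Longrightarrow> Suc (d p) = d v \<Longrightarrow> p \<in> P (root v)"
proof (induction "rk v" arbitrary: v p rule: less_induct)
  case less
  show ?case
  proof (cases "P' v = {}")
    case True then show ?thesis using root_eq[OF less.prems(1)] less.prems by simp
  next
    case False
    define q where "q = (SOME p. p \<in> P' v)"
    have q: "q \<in> P' v" unfolding q_def using False some_in_eq by blast
    have rv: "root v = root q" using root_eq[OF less.prems(1)] False q_def by simp
    have qV: "q \<in> V" and pV: "p \<in> V" using q less.prems PV' P'_sub by blast+
    have qP: "q \<in> P v" and dq: "d q = d v" using q unfolding P'_def by auto
    have rq: "rk q < rk v" using qP less.prems Prk by blast
    have "p \<noteq> q" using dq less.prems by auto
    then have "rk p \<noteq> rk q" using rk_eq pV qV by metis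
    then consider "rk p < rk q" | "rk q < rk p" by linarith
    then show ?thesis
    proof cases
      case 1
      then have "p \<in> P q" using cliq less.prems qP by blast
      then show ?thesis using less.hyps[OF rq qV] less.prems dq rv by simp
    next
      case 2
      then have "q \<in> P p" using cliq less.prems qP by blast
      then have "d q \<le> d p" using D3 pV by blast
      then show ?thesis using dq less.prems by simp
    qed
  qed
qed

lemma root_par: "r \<in> V \<Longrightarrow> P' r = {} \<Longrightarrow> p \<in> P r \<Longrightarrow> Suc (d p) = d r"
  using d_le1[of r p] unfolding P'_def by auto

definition kap :: "'a \<Rightarrow> 'a" where
  "kap r = (SOME p. p \<in> P r \<and> (\<forall>q\<in>P r. rk q \<le> rk p))"

lemma kap: "r \<in> V \<Longrightarrow> P r \<noteq> {} \<Longrightarrow> kap r \<in> P r \<and> (\<forall>q\<in>P r. rk q \<le> rk (kap r))"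
proof -
  assume r: "r \<in> V" "P r \<noteq> {}"
  have "Max (rk ` P r) \<in> rk ` P r" using finP[OF r(1)] r(2) by (intro Max_in) auto
  then obtain m where m: "m \<in> P r" "rk m = Max (rk ` P r)" by auto
  have "\<forall>q\<in>P r. rk q \<le> rk m" using m finP[OF r(1)] by auto
  then have "\<exists>p. p \<in> P r \<and> (\<forall>q\<in>P r. rk q \<le> rk p)" using m by blast
  then show ?thesis unfolding kap_def by (rule someI_ex)
qed

lemma kap2: "r \<in> V \<Longrightarrow> q \<in> P r \<Longrightarrow> q \<noteq> kap r \<Longrightarrow> q \<in> P (kap r)"
proof -
  assume a: "r \<in> V" "q \<in> P r" "q \<noteq> kap r"
  then have k: "kap r \<in> P r" "rk q \<le> rk (kap r)" using kap by blast+
  have "rk q \<noteq> rk (kap r)" using rk_eq a k PV' by metis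
  then show ?thesis using cliq a k by simp
qed

end


lemma lexN: "(b::nat) < N \<Longrightarrow> e < N \<Longrightarrow> a*N + b < c*N + e \<longleftrightarrow> a < c \<or> (a = c \<and> b < e)"
proof -
  assume b: "b < N" and e: "e < N"
  show ?thesis
  proof (cases "a < c")
    case True
    then have "Suc a * N \<le> c * N" by (intro mult_le_mono1) simp
    then show ?thesis using True b by simp
  next
    case False
    show ?thesis
    proof (cases "a = c")
      case True then show ?thesis by simp
    next
      case F2: False
      then have "c < a" using False by simp
      then have "Suc c * N \<le> a * N" by (intro mult_le_mono1) simp
      then show ?thesis using False F2 e by simp
    qed
  qed
qed

lemma digit_eq: "(b::nat) < M \<Longrightarrow> b' < M \<Longrightarrow> b + M*c = b' + M*c' \<Longrightarrow> b = b' \<and> c = c'"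
proof -
  assume a: "b < M" "b' < M" "b + M*c = b' + M*c'"
  have "(b + M*c) mod M = b" using a(1) by simp
  moreover have "(b' + M*c') mod M = b'" using a(2) by simp
  ultimately have bb: "b = b'" using a(3) by metis
  then have "M*c = M*c'" using a by simp
  then show ?thesis using bb a by simp
qed

locale S2 = S +
  fixes c' :: "'a \<Rightarrow> nat" and l' :: "'a \<Rightarrow> 'a \<Rightarrow> bool"
  assumes g': "good V (adj P') (tt k) c' l'"
begin

lemma c'_lt: "v \<in> V \<Longrightarrow> c' v < tt k" using g' unfolding good_def by blast
lemma c'_ne: "u \<in> V \<Longrightarrow> v \<in> V \<Longrightarrow> adj P' u v \<Longrightarrow> c' u \<noteq> c' v" using g' unfolding good_def by blast
lemma l'_irr: "\<not> l' x x" using g' unfolding good_def by blast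
lemma l'_trans: "l' x y \<Longrightarrow> l' y z \<Longrightarrow> l' x z" using g' unfolding good_def by blast
lemma l'_tot: "x \<in> V \<Longrightarrow> y \<in> V \<Longrightarrow> x \<noteq> y \<Longrightarrow> l' x y \<or> l' y x" using g' unfolding good_def by blast
lemma l'_cross: "u \<in> V \<Longrightarrow> v \<in> V \<Longrightarrow> x \<in> V \<Longrightarrow> y \<in> V \<Longrightarrow> adj P' u v \<Longrightarrow> adj P' x y \<Longrightarrow>
   c' u = c' x \<Longrightarrow> c' v = c' y \<Longrightarrow> l' u x \<Longrightarrow> l' y v \<Longrightarrow> False"
  using g' unfolding good_def by blast

definition rank :: "'a \<Rightarrow> nat" where "rank v = card {w\<in>V. l' w v}"

lemma rank_lt: "v \<in> V \<Longrightarrow> w \<in> V \<Longrightarrow> l' v w \<Longrightarrow> rank v < rank w"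
proof -
  assume a: "v \<in> V" "w \<in> V" "l' v w"
  have "{z\<in>V. l' z v} \<subset> {z\<in>V. l' z w}"
    using a l'_trans l'_irr by blast
  then show ?thesis unfolding rank_def using finV psubset_card_mono[of "{z\<in>V. l' z w}"] by auto
qed

lemma rank_iff: "v \<in> V \<Longrightarrow> w \<in> V \<Longrightarrow> rank v < rank w \<longleftrightarrow> l' v w"
proof
  assume a: "v \<in> V" "w \<in> V" "rank v < rank w"
  show "l' v w"
  proof (rule ccontr)
    assume "\<not> l' v w"
    moreover have "v \<noteq> w" using a by auto
    ultimately have "l' w v" using l'_tot a by blast
    then show False using rank_lt[of w v] a by simp
  qed
next
  assume "v \<in> V" "w \<in> V" "l' v w"
  then show "rank v < rank w" by (rule rank_lt)
qed

lemma rank_le: "rank v \<le> card V" unfolding rank_def using finV by (intro card_mono) auto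

definition N :: nat where "N = Suc (card V + Max (rk ` V))"

lemma rank_N: "rank v < N" using rank_le[of v] unfolding N_def by linarith
lemma rk_N: "v \<in> V \<Longrightarrow> rk v < N"
  using finV unfolding N_def by (simp add: le_imp_less_Suc trans_le_add2)

primrec KK :: "nat \<Rightarrow> 'a \<Rightarrow> nat" where
  "KK 0 v = (0 * N + rk (root v)) * N + rank v"
| "KK (Suc n) v = (KK n (kap (root v)) * N + rk (root v)) * N + rank v"

definition K :: "'a \<Rightarrow> nat" where "K v = KK (d v) v"
definition Kp :: "'a \<Rightarrow> nat" where "Kp v = (if d v = 0 then 0 else K (kap (root v)))"
definition gk :: "'a \<Rightarrow> nat" where "gk v = Kp v * N + rk (root v)"

lemma kap_root: "v \<in> V \<Longrightarrow> d v \<noteq> 0 \<Longrightarrow>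
   kap (root v) \<in> P (root v) \<and> kap (root v) \<in> V \<and> Suc (d (kap (root v))) = d v"
proof -
  assume v: "v \<in> V" "d v \<noteq> 0"
  have r: "root v \<in> V" "P' (root v) = {}" "d (root v) = d v" using root_props[OF v(1)] by auto
  have "P (root v) \<noteq> {}" using D0[OF r(1)] r v by auto
  then have "kap (root v) \<in> P (root v)" using kap r by blast
  then show ?thesis using root_par[OF r(1) r(2)] PV'[OF r(1)] r by auto
qed

lemma K_eq: "v \<in> V \<Longrightarrow> K v = gk v * N + rank v"
proof (cases "d v")
  case 0 then show ?thesis unfolding K_def gk_def Kp_def by simp
next
  case (Suc n)
  assume v: "v \<in> V"
  have "Suc (d (kap (root v))) = d v" using kap_root v Suc by simp
  then have "d (kap (root v)) = n" using Suc by simp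
  then show ?thesis unfolding K_def gk_def Kp_def using Suc by simp
qed

lemma gk_root: "v \<in> V \<Longrightarrow> w \<in> V \<Longrightarrow> gk v = gk w \<Longrightarrow> root v = root w"
proof -
  assume a: "v \<in> V" "w \<in> V" "gk v = gk w"
  have rv: "root v \<in> V" "root w \<in> V" using root_props a by auto
  have "rk (root v) = rk (root w)"
    using digit_eq[of "rk (root v)" N "rk (root w)" "Kp v" "Kp w"] rk_N[OF rv(1)] rk_N[OF rv(2)] a(3)
    unfolding gk_def by (simp add: mult.commute)
  then show ?thesis using rk_eq rv by blast
qed

lemma root_gk: "v \<in> V \<Longrightarrow> w \<in> V \<Longrightarrow> d v = d w \<Longrightarrow> root v = root w \<Longrightarrow> gk v = gk w"
  unfolding gk_def Kp_def by simp

lemma Kcmp: "v \<in> V \<Longrightarrow> w \<in> V \<Longrightarrow> d v = d w \<Longrightarrow>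
    K v < K w \<longleftrightarrow> gk v < gk w \<or> (root v = root w \<and> l' v w)"
proof -
  assume a: "v \<in> V" "w \<in> V" "d v = d w"
  have "K v < K w \<longleftrightarrow> gk v < gk w \<or> (gk v = gk w \<and> rank v < rank w)"
    using K_eq a lexN[OF rank_N rank_N] by simp
  moreover have "gk v = gk w \<longleftrightarrow> root v = root w" using gk_root[OF a(1,2)] root_gk[OF a] by blast
  moreover have "rank v < rank w \<longleftrightarrow> l' v w" using rank_iff a by blast
  ultimately show ?thesis by simp
qed

lemma K_inj: "v \<in> V \<Longrightarrow> w \<in> V \<Longrightarrow> d v = d w \<Longrightarrow> K v = K w \<Longrightarrow> v = w"
proof (rule ccontr)
  assume a: "v \<in> V" "w \<in> V" "d v = d w" "K v = K w" "v \<noteq> w"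
  then have "l' v w \<or> l' w v" using l'_tot by blast
  have "K v < K w \<or> K w < K v"
  proof (cases "root v = root w")
    case True
    then show ?thesis using \<open>l' v w \<or> l' w v\<close> Kcmp[OF a(1,2,3)] Kcmp[OF a(2,1) a(3)[symmetric]] by auto
  next
    case False
    then have "gk v \<noteq> gk w" using gk_root a by blast
    then have "gk v < gk w \<or> gk w < gk v" by arith
    then show ?thesis using Kcmp[OF a(1,2,3)] Kcmp[OF a(2,1) a(3)[symmetric]] by auto
  qed
  then show False using a by simp
qed

end


lemma m3: "(x::nat) \<le> y \<Longrightarrow> y \<le> x + 2 \<Longrightarrow> x mod 3 = y mod 3 \<Longrightarrow> x = y"
  by presburger
lemma arith3:
  fixes a b c e :: nat
  assumes "a mod 3 = c mod 3" "b mod 3 = e mod 3" "a \<le> c" "e \<le> b"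
    "a = b \<or> Suc a = b \<or> a = Suc b" "c = e \<or> Suc c = e \<or> c = Suc e"
  shows "(a = b \<and> c = e \<and> a = c) \<or> (c = a \<and> b = Suc a \<and> e = b) \<or> (c = a \<and> a = Suc b \<and> e = b)"
proof -
  have "c \<le> a + 2" using assms(4,5,6) by linarith
  then have ca: "c = a" using m3[of a c] assms(1,3) by simp
  have "b \<le> e + 2" using assms(5,6) ca by linarith
  then have "e = b" using m3[of e b] assms(2,4) by simp
  then show ?thesis using ca assms(5) by auto
qed

lemma tt_pos: "0 < tt k" by (induction k) auto

context S2 begin

definition rho :: "'a \<Rightarrow> nat" where "rho v = (if d v = 0 then 0 else c' (kap (root v)))"
definition col :: "'a \<Rightarrow> nat" where "col v = d v mod 3 + 3 * (c' v + tt k * rho v)"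
definition lt :: "'a \<Rightarrow> 'a \<Rightarrow> bool" where "lt v w \<longleftrightarrow> d v < d w \<or> (d v = d w \<and> K v < K w)"

lemma rho_lt: "v \<in> V \<Longrightarrow> rho v < tt k"
proof (cases "d v = 0")
  case True then show ?thesis unfolding rho_def using tt_pos by simp
next
  case False
  assume v: "v \<in> V"
  then show ?thesis unfolding rho_def using False kap_root[OF v False] c'_lt by simp
qed

lemma col_lt: "v \<in> V \<Longrightarrow> col v < tt (Suc k)"
proof -
  assume v: "v \<in> V"
  define T where "T = tt k"
  have a: "c' v < T" "rho v < T" using c'_lt rho_lt v T_def by auto
  have "c' v + T * rho v < T + T * rho v" using a by simp
  also have "\<dots> = T * Suc (rho v)" by simp
  also have "\<dots> \<le> T * T" using a by (intro mult_le_mono2) simp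
  finally have b: "c' v + T * rho v < T * T" .
  have "d v mod 3 < 3" by simp
  then have "col v < 3 + 3 * (c' v + T * rho v)" unfolding col_def T_def by simp
  also have "\<dots> \<le> 3 * (T * T)" using b by simp
  finally show ?thesis unfolding T_def by simp
qed

lemma col_dec: "u \<in> V \<Longrightarrow> v \<in> V \<Longrightarrow> col u = col v \<Longrightarrow>
    d u mod 3 = d v mod 3 \<and> c' u = c' v \<and> rho u = rho v"
proof -
  assume a: "u \<in> V" "v \<in> V" "col u = col v"
  have e: "d u mod 3 + 3 * (c' u + tt k * rho u) = d v mod 3 + 3*(c' v + tt k * rho v)"
    using a(3) unfolding col_def .
  have 1: "d u mod 3 = d v mod 3 \<and> c' u + tt k * rho u = c' v + tt k * rho v"
    by (rule digit_eq[OF _ _ e]) auto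
  then have "c' u = c' v \<and> rho u = rho v"
    using digit_eq[of "c' u" "tt k" "c' v"] c'_lt a by blast
  then show ?thesis using 1 by simp
qed

lemma mod3_ne: "Suc (a::nat) mod 3 \<noteq> a mod 3" by presburger


lemma cross_same:
  assumes V: "u \<in> V" "v \<in> V" "x \<in> V" "y \<in> V"
    and dd: "d u = d v" "d x = d y" "d u = d x"
    and ad: "adj P u v" "adj P x y" and cc: "col u = col x" "col v = col y"
    and kk: "K u < K x" "K y < K v"
  shows False
proof -
  have a1: "adj P' u v" "adj P' x y" using adj_same V ad dd by blast+
  have r1: "root u = root v" "root x = root y" using root_adj V a1 by blast+
  have c1: "c' u = c' x" "c' v = c' y" using col_dec V cc by blast+
  show False
  proof (cases "root u = root x")
    case True
    have g1: "gk u = gk x" using root_gk[OF V(1) V(3) dd(3) True] .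
    have g2: "gk y = gk v" using root_gk[OF V(4) V(2)] dd True r1 by simp
    note g = g1 g2
    have "l' u x" using Kcmp[of u x] V dd kk g by simp
    moreover have "l' y v" using Kcmp[of y v] V dd kk g by simp
    ultimately show False using l'_cross[OF V a1 c1] by blast
  next
    case False
    have g: "gk u = gk v" "gk x = gk y" using root_gk[OF V(1) V(2) dd(1) r1(1)] root_gk[OF V(3) V(4) dd(2) r1(2)] by auto
    have "gk u < gk x" using Kcmp[of u x] V dd kk False by auto
    moreover have "gk y < gk v" using Kcmp[of y v] V dd kk False r1 by auto
    ultimately show False using g by simp
  qed
qed

lemma cross_between:
  assumes V: "u \<in> V" "v \<in> V" "x \<in> V" "y \<in> V"
    and dd: "d x = d u" "d v = Suc (d u)" "d y = d v"
    and pp: "u \<in> P v" "x \<in> P y" and cc: "col u = col x" "col v = col y"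
    and kk: "K u < K x" "K y < K v"
  shows False
proof -
  define g where "g = root v"
  define h where "h = root y"
  have gV: "g \<in> V" "P' g = {}" "d g = d v" using root_props[OF V(2)] g_def by auto
  have hV: "h \<in> V" "P' h = {}" "d h = d y" using root_props[OF V(4)] h_def by auto
  have uP: "u \<in> P g" using shadow[OF V(2) pp(1)] dd g_def by simp
  have xP: "x \<in> P h" using shadow[OF V(4) pp(2)] dd h_def by simp
  have c1: "c' u = c' x" "rho v = rho y" using col_dec V cc by blast+
  have ux: "u \<noteq> x" using kk by auto
  show False
  proof (cases "g = h")
    case True
    then have "adj P' u x" using P'_adj[OF gV(1) uP _ ux] xP dd by simp
    then show False using c'_ne V c1 by blast
  next
    case gh: False
    define a where "a = kap g"
    define b where "b = kap h"
    have dv: "d v \<noteq> 0" "d y \<noteq> 0" using dd by auto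
    have aa: "a \<in> P g" "a \<in> V" "Suc (d a) = d v" using kap_root[OF V(2) dv(1)] a_def g_def by auto
    have bb: "b \<in> P h" "b \<in> V" "Suc (d b) = d y" using kap_root[OF V(4) dv(2)] b_def h_def by auto
    have cab: "c' a = c' b" using c1 dv unfolding rho_def a_def b_def g_def h_def by simp
    have "gk y < gk v" using Kcmp[of y v] V dd kk gh g_def h_def by auto
    then have "K b * N + rk h < K a * N + rk g"
      unfolding gk_def Kp_def using dv a_def b_def g_def h_def by simp
    then have kba: "K b < K a \<or> K b = K a \<and> rk h < rk g" using lexN rk_N gV hV by blast
    show False
    proof (cases "u = a")
      case True
      show False
      proof (cases "x = b")
        case True
        then show False using kba kk \<open>u = a\<close> by auto
      next
        case False
        have xb: "adj P' x b" using P'_adj[OF hV(1) xP bb(1) False] dd aa bb by simp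
        show False using c'_ne[OF V(3) bb(2) xb] c1 cab True by simp
      qed
    next
      case ua: False
      have xb: "x \<noteq> b"
      proof
        assume "x = b"
        have ua2: "adj P' u a" using P'_adj[OF gV(1) uP aa(1) ua] dd aa by simp
        show False using c'_ne[OF V(1) aa(2) ua2] c1 cab \<open>x = b\<close> by simp
      qed
      have uPa: "u \<in> P a" using kap2[OF gV(1) uP] ua a_def by simp
      have xPb: "x \<in> P b" using kap2[OF hV(1) xP] xb b_def by simp
      show False
      proof (cases "a = b")
        case True
        then have "adj P' u x" using P'_adj[OF aa(2) uPa _ ux] xPb dd by simp
        then show False using c'_ne V c1 by blast
      next
        case False
        have "K a \<noteq> K b" using K_inj[OF aa(2) bb(2)] aa bb dd False by auto
        then have kba2: "K b < K a" using kba by auto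
        have au: "adj P' u a" "adj P' x b" using uPa xPb aa bb dd unfolding adj_def P'_def by auto
        have ra: "root u = root a" "root x = root b" using root_adj V aa bb au by blast+
        show False
        proof (cases "root u = root x")
          case True
          have g2: "gk u = gk x" "gk b = gk a"
            using root_gk[OF V(1) V(3)] root_gk[OF bb(2) aa(2)] aa bb dd True ra by auto
          have "l' u x" using Kcmp[of u x] V dd kk g2 by simp
          moreover have "l' b a" using Kcmp[of b a] aa bb dd kba2 g2 by simp
          ultimately show False using l'_cross[OF V(1) aa(2) V(3) bb(2) au] c1 cab by blast
        next
          case False
          have g2: "gk u = gk a" "gk x = gk b"
            using root_gk[OF V(1) aa(2)] root_gk[OF V(3) bb(2)] aa bb dd ra by auto
          have "gk u < gk x" using Kcmp[of u x] V dd kk False by auto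
          moreover have "gk b < gk a" using Kcmp[of b a] aa bb dd kba2 False ra by auto
          ultimately show False using g2 by simp
        qed
      qed
    qed
  qed
qed

lemma good_new: "good V (adj P) (tt (Suc k)) col lt"
  unfolding good_def
proof (intro conjI)
  show "\<forall>v\<in>V. col v < tt (Suc k)" using col_lt by blast
  show "\<forall>u\<in>V. \<forall>v\<in>V. adj P u v \<longrightarrow> col u \<noteq> col v"
  proof (intro ballI impI notI)
    fix u v assume a: "u \<in> V" "v \<in> V" "adj P u v" "col u = col v"
    have c: "d u mod 3 = d v mod 3 \<and> c' u = c' v" using col_dec a by blast
    consider "d u = d v" | "Suc (d u) = d v" | "d u = Suc (d v)" using adj_d a by blast
    then show False
    proof cases
      case 1 then show False using adj_same[OF a(1,2,3)] c'_ne a c by blast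
    next
      case 2 then show False using c mod3_ne[of "d u"] by simp
    next
      case 3 then show False using c mod3_ne[of "d v"] by simp
    qed
  qed
  show "\<forall>x. \<not> lt x x" unfolding lt_def by simp
  show "\<forall>x y z. lt x y \<longrightarrow> lt y z \<longrightarrow> lt x z" unfolding lt_def by auto
  show "\<forall>x\<in>V. \<forall>y\<in>V. x \<noteq> y \<longrightarrow> lt x y \<or> lt y x"
  proof (intro ballI impI)
    fix x y assume a: "x \<in> V" "y \<in> V" "x \<noteq> y"
    show "lt x y \<or> lt y x"
    proof (cases "d x = d y")
      case True
      then have "K x \<noteq> K y" using K_inj a by blast
      then show ?thesis unfolding lt_def using True by arith
    next
      case False then show ?thesis unfolding lt_def by arith
    qed
  qed
  show "\<forall>u\<in>V. \<forall>v\<in>V. \<forall>x\<in>V. \<forall>y\<in>V. adj P u v \<longrightarrow> adj P x y \<longrightarrow> col u = col x \<longrightarrow> col v = col y \<longrightarrow>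
         lt u x \<longrightarrow> lt y v \<longrightarrow> False"
  proof (intro ballI impI)
    fix u v x y assume V: "u \<in> V" "v \<in> V" "x \<in> V" "y \<in> V"
      and ad: "adj P u v" "adj P x y" and cc: "col u = col x" "col v = col y"
      and l: "lt u x" "lt y v"
    have m: "d u mod 3 = d x mod 3" "d v mod 3 = d y mod 3" using col_dec V cc by blast+
    have l2: "d u \<le> d x" "d y \<le> d v" using l unfolding lt_def by auto
    have e1: "d u = d v \<or> Suc (d u) = d v \<or> d u = Suc (d v)" using adj_d V ad by blast
    have e2: "d x = d y \<or> Suc (d x) = d y \<or> d x = Suc (d y)" using adj_d V ad by blast
    have "(d u = d v \<and> d x = d y \<and> d u = d x) \<or> (d x = d u \<and> d v = Suc (d u) \<and> d y = d v)
        \<or> (d x = d u \<and> d u = Suc (d v) \<and> d y = d v)"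
      using arith3[OF m l2 e1 e2] .
    then consider (s) "d u = d v" "d x = d y" "d u = d x"
      | (b1) "d x = d u" "d v = Suc (d u)" "d y = d v"
      | (b2) "d x = d u" "d u = Suc (d v)" "d y = d v" by blast
    then show False
    proof cases
      case s
      then have "K u < K x" "K y < K v" using l unfolding lt_def by auto
      then show False using cross_same[OF V s ad cc] by blast
    next
      case b1
      then have k: "K u < K x" "K y < K v" using l unfolding lt_def by auto
      have "u \<in> P v" "x \<in> P y" using adj_up V ad b1 by auto
      then show False using cross_between[OF V b1 _ _ cc k] by blast
    next
      case b2
      then have k: "K u < K x" "K y < K v" using l unfolding lt_def by auto
      have a2: "adj P v u" "adj P y x" using ad unfolding adj_def by auto
      have "v \<in> P u" "y \<in> P x" using adj_up V a2 b2 by auto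
      then show False
        using cross_between[of y x v u] V b2 cc k by auto
    qed
  qed
qed

end


theorem gen: "kstr k V P rk \<Longrightarrow> \<exists>col lt. good V (adj P) (tt k) col lt"
proof (induction k arbitrary: P)
  case 0
  have fin: "finite V" using 0 unfolding kstr_def by blast
  have e: "\<And>v. v \<in> V \<Longrightarrow> P v = {}"
  proof -
    fix v assume v: "v \<in> V"
    have "P v \<subseteq> V" "card (P v) \<le> 0" using 0 v unfolding kstr_def by blast+
    then show "P v = {}" using fin finite_subset by fastforce
  qed
  have inj: "inj_on rk V" using 0 unfolding kstr_def by blast
  have "good V (adj P) (tt 0) (\<lambda>_. 0) (\<lambda>v w. rk v < rk w)"
    unfolding good_def adj_def using e inj by (auto simp: inj_on_def) (meson linorder_neqE_nat)
  then show ?case by blast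
next
  case (Suc k)
  interpret s: S k V P rk using Suc.prems by unfold_locales
  obtain c' l' where g: "good V (adj s.P') (tt k) c' l'" using Suc.IH[OF s.kstr_P'] by blast
  interpret s2: S2 k V P rk c' l' using Suc.prems g by (intro S2.intro S2_axioms.intro S.intro)
  show ?case using s2.good_new by blast
qed

lemma p3t_inv: "planar3tree_faces V E F \<Longrightarrow> \<exists>P rk. kstr 3 V P rk \<and> E = {{v,p} | v p. v \<in> V \<and> p \<in> P v} \<and>
   (\<forall>f. f \<in># F \<longrightarrow> f \<subseteq> V \<and> (\<forall>p\<in>f. \<forall>q\<in>f. p \<noteq> q \<longrightarrow> {p,q} \<in> E))"
proof (induction rule: planar3tree_faces.induct)
  case (base a b c)
  then have ne: "a \<noteq> b" "b \<noteq> c" "a \<noteq> c" by auto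
  define P where "P = (\<lambda>w. if w = b then {a} else if w = c then {a,b} else {})"
  define rk where "rk = (\<lambda>w. if w = a then 0 else if w = b then 1 else (2::nat))"
  have "kstr 3 {a,b,c} P rk"
    unfolding kstr_def P_def rk_def using ne by (auto simp: inj_on_def card_insert_if)
  moreover have "{{a, b}, {b, c}, {a, c}} = {{v,p} | v p. v \<in> {a,b,c} \<and> p \<in> P v}"
    unfolding P_def using ne by (auto simp: insert_commute)
  moreover have "\<forall>f. f \<in># {#{a, b, c}, {a, b, c}#} \<longrightarrow> f \<subseteq> {a,b,c} \<and>
      (\<forall>p\<in>f. \<forall>q\<in>f. p \<noteq> q \<longrightarrow> {p,q} \<in> {{a, b}, {b, c}, {a, c}})"
    by (auto simp: insert_commute)
  ultimately show ?case by blast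
next
  case (step V E F x y z v)
  obtain P rk where ks: "kstr 3 V P rk" and EE: "E = {{v,p} | v p. v \<in> V \<and> p \<in> P v}"
    and FF: "\<forall>f. f \<in># F \<longrightarrow> f \<subseteq> V \<and> (\<forall>p\<in>f. \<forall>q\<in>f. p \<noteq> q \<longrightarrow> {p,q} \<in> E)"
    using step.IH by blast
  have fsub: "{x,y,z} \<subseteq> V" and fcl: "\<forall>p\<in>{x,y,z}. \<forall>q\<in>{x,y,z}. p \<noteq> q \<longrightarrow> {p,q} \<in> E"
    using FF step.hyps(2) by blast+
  have finV: "finite V" using ks unfolding kstr_def by blast
  define P2 where "P2 = P(v := {x,y,z})"
  define M where "M = Suc (Max (rk ` V))"
  define rk2 where "rk2 = rk(v := M)"
  have rkM: "\<And>w. w \<in> V \<Longrightarrow> rk w < M" unfolding M_def using finV by (simp add: le_imp_less_Suc)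
  have vV: "v \<notin> V" by fact
  have ks2: "kstr 3 (insert v V) P2 rk2"
    unfolding kstr_def
  proof (intro conjI ballI[of "insert v V"])
    show "finite (insert v V)" using finV by simp
    show "inj_on rk2 (insert v V)"
      using ks vV rkM unfolding kstr_def rk2_def inj_on_def by (metis fun_upd_apply less_irrefl insert_iff)
    fix w assume w: "w \<in> insert v V"
    show "P2 w \<subseteq> insert v V" "card (P2 w) \<le> 3" "\<forall>p\<in>P2 w. rk2 p < rk2 w"
      "\<forall>p\<in>P2 w. \<forall>q\<in>P2 w. rk2 p < rk2 q \<longrightarrow> p \<in> P2 q"
    proof -
      consider "w = v" | "w \<in> V" "w \<noteq> v" using w by blast
      then have "P2 w \<subseteq> insert v V \<and> card (P2 w) \<le> 3 \<and> (\<forall>p\<in>P2 w. rk2 p < rk2 w) \<and>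
         (\<forall>p\<in>P2 w. \<forall>q\<in>P2 w. rk2 p < rk2 q \<longrightarrow> p \<in> P2 q)"
      proof cases
        case 1
        have c3: "card {x,y,z} \<le> 3" by (simp add: card_insert_if)
        have cl: "\<forall>p\<in>{x,y,z}. \<forall>q\<in>{x,y,z}. rk p < rk q \<longrightarrow> p \<in> P q"
        proof (intro ballI impI)
          fix p q assume pq: "p \<in> {x,y,z}" "q \<in> {x,y,z}" "rk p < rk q"
          then have "{p,q} \<in> E" using fcl by auto
          then obtain a b where ab: "{p,q} = {a,b}" "a \<in> V" "b \<in> P a" using EE by blast
          have "b \<in> V" "rk b < rk a" using ks ab unfolding kstr_def by blast+
          then show "p \<in> P q" using ab pq by (auto simp: doubleton_eq_iff)
        qed
        have "\<forall>p\<in>{x,y,z}. p \<noteq> v" using fsub vV by blast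
        then show ?thesis using 1 fsub c3 cl rkM unfolding P2_def rk2_def by auto
      next
        case 2
        have "P w \<subseteq> V" "card (P w) \<le> 3" "\<forall>p\<in>P w. rk p < rk w"
          "\<forall>p\<in>P w. \<forall>q\<in>P w. rk p < rk q \<longrightarrow> p \<in> P q" using ks 2 unfolding kstr_def by blast+
        moreover have "\<forall>p\<in>P w. p \<noteq> v" using \<open>P w \<subseteq> V\<close> vV by blast
        ultimately show ?thesis using 2 unfolding P2_def rk2_def by auto
      qed
      then show "P2 w \<subseteq> insert v V" "card (P2 w) \<le> 3" "\<forall>p\<in>P2 w. rk2 p < rk2 w"
        "\<forall>p\<in>P2 w. \<forall>q\<in>P2 w. rk2 p < rk2 q \<longrightarrow> p \<in> P2 q" by blast+
    qed
  qed
  have E2: "E \<union> {{v, x}, {v, y}, {v, z}} = {{w,p} | w p. w \<in> insert v V \<and> p \<in> P2 w}"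
  proof (intro equalityI subsetI)
    fix e assume "e \<in> E \<union> {{v, x}, {v, y}, {v, z}}"
    then consider "e \<in> E" | "e = {v,x}" | "e = {v,y}" | "e = {v,z}" by blast
    then show "e \<in> {{w,p} | w p. w \<in> insert v V \<and> p \<in> P2 w}"
    proof cases
      case 1
      then obtain w p where wp: "e = {w,p}" "w \<in> V" "p \<in> P w" using EE by blast
      then have "w \<noteq> v" using vV by blast
      then have "p \<in> P2 w" using wp unfolding P2_def by simp
      then show ?thesis using wp by blast
    qed (auto simp: P2_def)
  next
    fix e assume "e \<in> {{w,p} | w p. w \<in> insert v V \<and> p \<in> P2 w}"
    then obtain w p where e: "e = {w,p}" "w \<in> insert v V" "p \<in> P2 w" by blast
    show "e \<in> E \<union> {{v, x}, {v, y}, {v, z}}"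
    proof (cases "w = v")
      case True then show ?thesis using e unfolding P2_def by auto
    next
      case False
      then have "w \<in> V" "p \<in> P w" using e unfolding P2_def by auto
      then show ?thesis using e EE by blast
    qed
  qed
  have F2: "\<forall>f. f \<in># add_mset {v, x, y} (add_mset {v, y, z} (add_mset {v, x, z} (F - {#{x, y, z}#}))) \<longrightarrow>
      f \<subseteq> insert v V \<and> (\<forall>p\<in>f. \<forall>q\<in>f. p \<noteq> q \<longrightarrow> {p,q} \<in> E \<union> {{v, x}, {v, y}, {v, z}})"
  proof (intro allI impI)
    fix f assume f: "f \<in># add_mset {v, x, y} (add_mset {v, y, z} (add_mset {v, x, z} (F - {#{x, y, z}#})))"
    then consider "f = {v,x,y}" | "f = {v,y,z}" | "f = {v,x,z}" | "f \<in># F" by (auto dest: in_diffD)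
    then show "f \<subseteq> insert v V \<and> (\<forall>p\<in>f. \<forall>q\<in>f. p \<noteq> q \<longrightarrow> {p,q} \<in> E \<union> {{v, x}, {v, y}, {v, z}})"
    proof cases
      case 4 then show ?thesis using FF by blast
    qed (use fsub fcl in \<open>auto simp: insert_commute\<close>)
  qed
  show ?case using ks2 E2 F2 by blast
qed



theorem mainTheorem3:
  fixes V :: "'a set" and E :: "'a set set"
  assumes "planar_3_tree V E"
  shows "\<exists>t\<le>4000. has_track_layout V E t"
proof -
  obtain F where pf: "planar3tree_faces V E F" using assms unfolding planar_3_tree_def by blast
  obtain P rk where H: "kstr 3 V P rk \<and> E = {{v,p} | v p. v \<in> V \<and> p \<in> P v} \<and>
   (\<forall>f. f \<in># F \<longrightarrow> f \<subseteq> V \<and> (\<forall>p\<in>f. \<forall>q\<in>f. p \<noteq> q \<longrightarrow> {p,q} \<in> E))"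
    using p3t_inv[OF pf] by (elim exE)
  have ks: "kstr 3 V P rk" and EE: "E = {{v,p} | v p. v \<in> V \<and> p \<in> P v}" using H by simp_all
  obtain col lt where g: "good V (adj P) (tt 3) col lt" using gen[OF ks] by blast
  have t3: "tt 3 = 2187" by (simp add: numeral_3_eq_3)
  have PV: "\<And>v p. v \<in> V \<Longrightarrow> p \<in> P v \<Longrightarrow> p \<in> V" using ks unfolding kstr_def by blast
  have edge: "\<And>u w. {u,w} \<in> E \<Longrightarrow> u \<in> V \<and> w \<in> V \<and> adj P u w"
  proof -
    fix u w assume "{u,w} \<in> E"
    then obtain v p where vp: "{u,w} = {v,p}" "v \<in> V" "p \<in> P v" using EE by blast
    then have "p \<in> V" using PV by blast
    then show "u \<in> V \<and> w \<in> V \<and> adj P u w" using vp unfolding adj_def by (auto simp: doubleton_eq_iff)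
  qed
  define ord where "ord = (\<lambda>i. {(u,w). u \<in> V \<and> w \<in> V \<and> col u = i \<and> col w = i \<and> lt u w})"
  have gg: "\<forall>v\<in>V. col v < tt 3" "\<forall>u\<in>V. \<forall>v\<in>V. adj P u v \<longrightarrow> col u \<noteq> col v"
     "\<forall>x. \<not> lt x x" "\<forall>x y z. lt x y \<longrightarrow> lt y z \<longrightarrow> lt x z"
     "\<forall>x\<in>V. \<forall>y\<in>V. x \<noteq> y \<longrightarrow> lt x y \<or> lt y x"
     "\<forall>u\<in>V. \<forall>v\<in>V. \<forall>x\<in>V. \<forall>y\<in>V. adj P u v \<longrightarrow> adj P x y \<longrightarrow> col u = col x \<longrightarrow> col v = col y \<longrightarrow>
         lt u x \<longrightarrow> lt y v \<longrightarrow> False"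
    using g unfolding good_def by blast+
  have "track_layout V E (tt 3) col ord"
    unfolding track_layout_def
  proof (intro conjI allI impI)
    show "\<forall>v\<in>V. col v < tt 3" using gg by blast
  next
    fix u v assume "{u, v} \<in> E"
    then show "col u \<noteq> col v" using edge gg(2) by blast
  next
    fix i assume "i < tt 3"
    show "strict_linear_order_on {v \<in> V. col v = i} (ord i)"
      unfolding strict_linear_order_on_def
    proof (intro conjI)
      show "trans (ord i)" unfolding trans_def ord_def using gg(4) by auto
      show "irrefl (ord i)" unfolding irrefl_def ord_def using gg(3) by auto
      show "total_on {v \<in> V. col v = i} (ord i)" unfolding total_on_def ord_def using gg(5) by auto
    qed
  next
    fix u v x y
    assume a: "{u, v} \<in> E \<and> {x, y} \<in> E \<and> u \<in> V \<and> v \<in> V \<and> x \<in> V \<and> y \<in> V \<and>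
        col u = col x \<and> col v = col y \<and> col u \<noteq> col v \<and> (u, x) \<in> ord (col u) \<and> (y, v) \<in> ord (col v)"
    then have "adj P u v" "adj P x y" "lt u x" "lt y v" using edge unfolding ord_def by auto
    moreover have "u \<in> V" "v \<in> V" "x \<in> V" "y \<in> V" "col u = col x" "col v = col y" using a by auto
    ultimately show False using gg(6)[rule_format, of u v x y] by blast
  qed
  then have "has_track_layout V E (tt 3)" unfolding has_track_layout_def by blast
  then show ?thesis using t3 by (intro exI[of _ "tt 3"]) simp
qed


end
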